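(* (a) Soundness $\Delta^{\mathcal T}_{\mathcal R}\triangleleft\lambda^{\mathcal T}_\cap$ holds for $\Delta^{CD}_{\equiv}$, $\Delta^{CDV}_{\equiv}$, $\Delta^{CDS}_{\equiv}$, $\Delta^{BCD}_{\equiv}$, $\Delta^{CDS}_{=_\beta}$ and $\Delta^{BCD}_{=_\beta}$, and fails for $\Delta^{CD}_{=_\beta}$, $\Delta^{CDV}_{=_\beta}$, $\Delta^{CDV}_{=_{\beta\eta}}$ and $\Delta^{BCD}_{=_{\beta\eta}}$. (b) Completeness $\Delta^{\mathcal T}_{\mathcal R}\triangleright\lambda^{\mathcal T}_\cap$ holds for all ten systems $\Delta^{\mathcal T}_{\equiv}$, $\Delta^{\mathcal T}_{=_\beta}$ ($\mathcal T\in\{CD,CDS,CDV,BCD\}$), $\Delta^{CDV}_{=_{\beta\eta}}$, $\Delta^{BCD}_{=_{\beta\eta}}$. Consequently $\Delta^{\mathcal T}_{\mathcal R}\sim\lambda^{\mathcal T}_\cap$ exactly for the six systems listed as sound in (a).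
   Context: Type atoms: a set $\mathbb{A}$ of symbols; $\omega$ denotes a distinguished atom (the universal type). $\mathbb{A}_\infty=\{\mathtt a_i\mid i\in\mathbb N\}$ with each $\mathtt a_i\neq\omega$, and $\mathbb{A}^\omega_\infty=\mathbb{A}_\infty\cup\{\omega\}$. Intersection types over $\mathbb A$: $\sigma::= a\mid\sigma\to\sigma\mid\sigma\cap\sigma$ ($a\in\mathbb A$). An intersection type theory $\mathcal T$ over $\mathbb A$ is a set of inequalities $\sigma\le\tau$ (written $\sigma\le_{\mathcal T}\tau$) closed under (refl) $\sigma\le\sigma$; (incl) $\sigma\cap\tau\le\sigma$ and $\sigma\cap\tau\le\tau$; (glb) $\rho\le\sigma$ and $\rho\le\tau$ imply $\rho\le\sigma\cap\tau$; (trans) $\sigma\le\tau$ and $\tau\le\rho$ imply $\sigma\le\rho$. Additional axioms/rules: $(\omega_{top})$ $\sigma\le\omega$; $(\omega_{\to})$ $\omega\le\sigma\to\omega$; $(\to\cap)$ $(\sigma\to\tau)\cap(\sigma\to\rho)\le\sigma\to(\tau\cap\rho)$; $(\to)$ $\sigma_2\le\sigma_1$ and $\tau_1\le\tau_2$ imply $\sigma_1\to\tau_1\le\sigma_2\to\tau_2$. $\mathcal T_{CD}$ = smallest type theory over $\mathbb A_\infty$; $\mathcal T_{CDS}$ = smallest over $\mathbb A^\omega_\infty$ containing $(\omega_{top})$; $\mathcal T_{CDV}$ = smallest over $\mathbb A_\infty$ closed under $(\to)$ and $(\to\cap)$; $\mathcal T_{BCD}$ = smallest over $\mathbb A^\omega_\infty$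 closed under $(\to),(\to\cap),(\omega_{top}),(\omega_\to)$. We abbreviate these as CD, CDS, CDV, BCD. Type assignment: for a type theory $\mathcal T$ over atoms $\mathbb A$, $\lambda^{\mathcal T}_\cap$ derives judgments $B\vdash^{\mathcal T}_\cap M:\sigma$ for pure $\lambda$-terms $M$ and bases $B$ (finite sets of declarations $x{:}\sigma$ with distinct variables) by: (ax) $B\vdash x:\sigma$ if $x{:}\sigma\in B$; ($\to$I) from $B,x{:}\sigma\vdash M:\tau$ infer $B\vdash\lambda x.M:\sigma\to\tau$; ($\to$E) from $B\vdash M:\sigma\to\tau$ and $B\vdash N:\sigma$ infer $B\vdash MN:\tau$; ($\cap$I) from $B\vdash M:\sigma$ and $B\vdash M:\tau$ infer $B\vdash M:\sigma\cap\tau$; ($\cap$E) from $B\vdash M:\sigma\cap\tau$ infer $B\vdash M:\sigma$ and $B\vdash M:\tau$; (top) $B\vdash M:\omega$ if $\omega\in\mathbb A$; ($\le_{\mathcal T}$) from $B\vdash M:\sigma$ and $\sigma\le_{\mathcal T}\tau$ infer $B\vdash M:\tau$. $\Delta$-terms: $\Delta::=u_\Delta\mid x\mid\lambda x{:}\sigma.\Delta\mid\Delta\,\Delta\mid\langle\Delta,\Delta\rangle\mid pr_1\Delta\mid pr_2\Delta\mid\Delta^\sigma$, where for every (not necessarily typable) $\Delta$-term $\Delta$ there is a constant $u_\Delta$. The essence $\|\Delta\|$ is the pure $\lambda$-term defined by $\|x\|=x$, $\|u_\Delta\|=\|\Delta\|$, $\|\Delta^\sigma\|=\|\Delta\|$,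 $\|\lambda x{:}\sigma.\Delta\|=\lambda x.\|\Delta\|$, $\|\Delta_1\Delta_2\|=\|\Delta_1\|\,\|\Delta_2\|$, $\|\langle\Delta_1,\Delta_2\rangle\|=\|\Delta_1\|$, $\|pr_i\Delta\|=\|\Delta\|$. Let $\mathcal R$ be one of $\equiv$ (syntactic identity up to $\alpha$), $=_\beta$, $=_{\beta\eta}$ on pure $\lambda$-terms. The typed system $\Delta^{\mathcal T}_{\mathcal R}$ derives $B\vdash^{\mathcal T}_{\mathcal R}\Delta:\sigma$ by: (top) $B\vdash u_\Delta:\omega$ if $\omega\in\mathbb A$; (ax) $B\vdash x:\sigma$ if $x{:}\sigma\in B$; ($\to$I) from $B,x{:}\sigma\vdash\Delta:\tau$ infer $B\vdash\lambda x{:}\sigma.\Delta:\sigma\to\tau$; ($\to$E) from $B\vdash\Delta_1:\sigma\to\tau$ and $B\vdash\Delta_2:\sigma$ infer $B\vdash\Delta_1\Delta_2:\tau$; ($\cap$I) from $B\vdash\Delta_1:\sigma$, $B\vdash\Delta_2:\tau$ and $\|\Delta_1\|\mathrel{\mathcal R}\|\Delta_2\|$ infer $B\vdash\langle\Delta_1,\Delta_2\rangle:\sigma\cap\tau$; ($\cap$E$_1$) from $B\vdash\Delta:\sigma\cap\tau$ infer $B\vdash pr_1\Delta:\sigma$; ($\cap$E$_2$) from $B\vdash\Delta:\sigma\cap\tau$ infer $B\vdash pr_2\Delta:\tau$; ($\le_{\mathcal T}$) from $B\vdash\Delta:\sigma$ and $\sigma\le_{\mathcal T}\tau$ infer $B\vdash\Delta^\tau:\tau$.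 We write $\Delta^{CD}_{\mathcal R}$ for $\Delta^{\mathcal T_{CD}}_{\mathcal R}$, etc. Soundness $\Delta^{\mathcal T}_{\mathcal R}\triangleleft\lambda^{\mathcal T}_\cap$: for all $B,\Delta,\sigma$, $B\vdash^{\mathcal T}_{\mathcal R}\Delta:\sigma$ implies $B\vdash^{\mathcal T}_\cap\|\Delta\|:\sigma$. Completeness $\Delta^{\mathcal T}_{\mathcal R}\triangleright\lambda^{\mathcal T}_\cap$: for all $B,M,\sigma$, $B\vdash^{\mathcal T}_\cap M:\sigma$ implies there is $\Delta$ with $M\equiv\|\Delta\|$ and $B\vdash^{\mathcal T}_{\mathcal R}\Delta:\sigma$. Isomorphism $\Delta^{\mathcal T}_{\mathcal R}\sim\lambda^{\mathcal T}_\cap$: both soundness and completeness. *)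

theory Defs
  imports Main
begin

text \<open>Atoms: Atom i is a_i (i in nat), Om is the universal atom omega.\<close>
datatype ity = Atom nat | Om | Arr ity ity | Inter ity ity

datatype theory_name = CD | CDS | CDV | BCD

text \<open>omega is an atom of the theory (atom set A^omega_infinity) iff CDS or BCD.\<close>
definition has_omega :: "theory_name \<Rightarrow> bool" where
  "has_omega T \<longleftrightarrow> T = CDS \<or> T = BCD"

definition has_arrow_rules :: "theory_name \<Rightarrow> bool" where
  "has_arrow_rules T \<longleftrightarrow> T = CDV \<or> T = BCD"

fun ty_ok :: "theory_name \<Rightarrow> ity \<Rightarrow> bool" where
  "ty_ok T (Atom i) = True"
| "ty_ok T Om = has_omega T"
| "ty_ok T (Arr s t) = (ty_ok T s \<and> ty_ok T t)"
| "ty_ok T (Inter s t) = (ty_ok T s \<and> ty_ok T t)"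

inductive leq :: "theory_name \<Rightarrow> ity \<Rightarrow> ity \<Rightarrow> bool" for T where
  refl: "ty_ok T s \<Longrightarrow> leq T s s"
| incl1: "ty_ok T s \<Longrightarrow> ty_ok T t \<Longrightarrow> leq T (Inter s t) s"
| incl2: "ty_ok T s \<Longrightarrow> ty_ok T t \<Longrightarrow> leq T (Inter s t) t"
| glb: "leq T r s \<Longrightarrow> leq T r t \<Longrightarrow> leq T r (Inter s t)"
| trans: "leq T s t \<Longrightarrow> leq T t r \<Longrightarrow> leq T s r"
| omega_top: "T = CDS \<or> T = BCD \<Longrightarrow> ty_ok T s \<Longrightarrow> leq T s Om"
| omega_arr: "T = BCD \<Longrightarrow> ty_ok T s \<Longrightarrow> leq T Om (Arr s Om)"
| arr_inter: "has_arrow_rules T \<Longrightarrow> ty_ok T s \<Longrightarrow> ty_ok T t \<Longrightarrow> ty_ok T r \<Longrightarrow>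
      leq T (Inter (Arr s t) (Arr s r)) (Arr s (Inter t r))"
| arr: "has_arrow_rules T \<Longrightarrow> leq T s2 s1 \<Longrightarrow> leq T t1 t2 \<Longrightarrow>
      leq T (Arr s1 t1) (Arr s2 t2)"

section \<open>Pure lambda terms (de Bruijn indices, so alpha-equivalence is equality)\<close>

datatype lterm = LVar nat | LApp lterm lterm | LAbs lterm

primrec llift :: "lterm \<Rightarrow> nat \<Rightarrow> lterm" where
  "llift (LVar i) k = (if i < k then LVar i else LVar (Suc i))"
| "llift (LApp s t) k = LApp (llift s k) (llift t k)"
| "llift (LAbs s) k = LAbs (llift s (Suc k))"

primrec lsubst :: "lterm \<Rightarrow> lterm \<Rightarrow> nat \<Rightarrow> lterm" where
  "lsubst (LVar i) s k = (if k < i then LVar (i - 1) else if i = k then s else LVar i)"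
| "lsubst (LApp t u) s k = LApp (lsubst t s k) (lsubst u s k)"
| "lsubst (LAbs t) s k = LAbs (lsubst t (llift s 0) (Suc k))"

inductive beta :: "lterm \<Rightarrow> lterm \<Rightarrow> bool" where
  b: "beta (LApp (LAbs s) t) (lsubst s t 0)"
| appL: "beta s t \<Longrightarrow> beta (LApp s u) (LApp t u)"
| appR: "beta s t \<Longrightarrow> beta (LApp u s) (LApp u t)"
| abs: "beta s t \<Longrightarrow> beta (LAbs s) (LAbs t)"

inductive beta_eta :: "lterm \<Rightarrow> lterm \<Rightarrow> bool" where
  b: "beta_eta (LApp (LAbs s) t) (lsubst s t 0)"
| e: "beta_eta (LAbs (LApp (llift s 0) (LVar 0))) s"
| appL: "beta_eta s t \<Longrightarrow> beta_eta (LApp s u) (LApp t u)"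
| appR: "beta_eta s t \<Longrightarrow> beta_eta (LApp u s) (LApp u t)"
| abs: "beta_eta s t \<Longrightarrow> beta_eta (LAbs s) (LAbs t)"

datatype rel_name = Syn | Beta | BetaEta

fun releq :: "rel_name \<Rightarrow> lterm \<Rightarrow> lterm \<Rightarrow> bool" where
  "releq Syn M N = (M = N)"
| "releq Beta M N = (sup beta beta\<inverse>\<inverse>)\<^sup>*\<^sup>* M N"
| "releq BetaEta M N = (sup beta_eta beta_eta\<inverse>\<inverse>)\<^sup>*\<^sup>* M N"

type_synonym basis = "nat \<Rightarrow> ity option"

definition ext_basis :: "ity \<Rightarrow> basis \<Rightarrow> basis" where
  "ext_basis s B = (\<lambda>n. case n of 0 \<Rightarrow> Some s | Suc m \<Rightarrow> B m)"

definition basis_ok :: "theory_name \<Rightarrow> basis \<Rightarrow> bool" where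
  "basis_ok T B \<longleftrightarrow> finite (dom B) \<and> (\<forall>x s. B x = Some s \<longrightarrow> ty_ok T s)"

inductive ltyp :: "theory_name \<Rightarrow> basis \<Rightarrow> lterm \<Rightarrow> ity \<Rightarrow> bool" for T where
  ax: "B x = Some s \<Longrightarrow> ltyp T B (LVar x) s"
| arrI: "ty_ok T s \<Longrightarrow> ltyp T (ext_basis s B) M t \<Longrightarrow> ltyp T B (LAbs M) (Arr s t)"
| arrE: "ltyp T B M (Arr s t) \<Longrightarrow> ltyp T B N s \<Longrightarrow> ltyp T B (LApp M N) t"
| interI: "ltyp T B M s \<Longrightarrow> ltyp T B M t \<Longrightarrow> ltyp T B M (Inter s t)"
| interE1: "ltyp T B M (Inter s t) \<Longrightarrow> ltyp T B M s"
| interE2: "ltyp T B M (Inter s t) \<Longrightarrow> ltyp T B M t"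
| top: "has_omega T \<Longrightarrow> ltyp T B M Om"
| sub: "ltyp T B M s \<Longrightarrow> leq T s t \<Longrightarrow> ltyp T B M t"

datatype dterm =
    DU dterm
  | DVar nat
  | DLam ity dterm
  | DApp dterm dterm
  | DPair dterm dterm
  | DPr1 dterm
  | DPr2 dterm
  | DCoe dterm ity

primrec ess :: "dterm \<Rightarrow> lterm" where
  "ess (DU d) = ess d"
| "ess (DVar x) = LVar x"
| "ess (DLam s d) = LAbs (ess d)"
| "ess (DApp d1 d2) = LApp (ess d1) (ess d2)"
| "ess (DPair d1 d2) = ess d1"
| "ess (DPr1 d) = ess d"
| "ess (DPr2 d) = ess d"
| "ess (DCoe d s) = ess d"

inductive dtyp :: "theory_name \<Rightarrow> rel_name \<Rightarrow> basis \<Rightarrow> dterm \<Rightarrow> ity \<Rightarrow> bool" for T R where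
  top: "has_omega T \<Longrightarrow> dtyp T R B (DU d) Om"
| ax: "B x = Some s \<Longrightarrow> dtyp T R B (DVar x) s"
| arrI: "ty_ok T s \<Longrightarrow> dtyp T R (ext_basis s B) d t \<Longrightarrow> dtyp T R B (DLam s d) (Arr s t)"
| arrE: "dtyp T R B d1 (Arr s t) \<Longrightarrow> dtyp T R B d2 s \<Longrightarrow> dtyp T R B (DApp d1 d2) t"
| interI: "dtyp T R B d1 s \<Longrightarrow> dtyp T R B d2 t \<Longrightarrow> releq R (ess d1) (ess d2) \<Longrightarrow>
      dtyp T R B (DPair d1 d2) (Inter s t)"
| interE1: "dtyp T R B d (Inter s t) \<Longrightarrow> dtyp T R B (DPr1 d) s"
| interE2: "dtyp T R B d (Inter s t) \<Longrightarrow> dtyp T R B (DPr2 d) t"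
| sub: "dtyp T R B d s \<Longrightarrow> leq T s t \<Longrightarrow> dtyp T R B (DCoe d t) t"

definition sound :: "theory_name \<Rightarrow> rel_name \<Rightarrow> bool" where
  "sound T R \<longleftrightarrow> (\<forall>B d s. basis_ok T B \<longrightarrow> ty_ok T s \<longrightarrow>
      dtyp T R B d s \<longrightarrow> ltyp T B (ess d) s)"

definition complete :: "theory_name \<Rightarrow> rel_name \<Rightarrow> bool" where
  "complete T R \<longleftrightarrow> (\<forall>B M s. basis_ok T B \<longrightarrow> ty_ok T s \<longrightarrow>
      ltyp T B M s \<longrightarrow> (\<exists>d. M = ess d \<and> dtyp T R B d s))"

definition isomorphic :: "theory_name \<Rightarrow> rel_name \<Rightarrow> bool" where
  "isomorphic T R \<longleftrightarrow> sound T R \<and> complete T R"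

end

theory Submission
  imports Defs
begin

lemma leq_ok: "leq T s t \<Longrightarrow> ty_ok T s \<and> ty_ok T t"
  by (induction rule: leq.induct) (auto simp: has_omega_def)

definition bok :: "theory_name \<Rightarrow> basis \<Rightarrow> bool" where
  "bok T B \<longleftrightarrow> (\<forall>x s. B x = Some s \<longrightarrow> ty_ok T s)"

lemma bok_ext: "bok T B \<Longrightarrow> ty_ok T s \<Longrightarrow> bok T (ext_basis s B)"
  unfolding bok_def ext_basis_def by (auto split: nat.splits)

lemma ltyp_ok: "ltyp T B M t \<Longrightarrow> bok T B \<Longrightarrow> ty_ok T t"
proof (induction rule: ltyp.induct)
  case (arrI s B M t) thus ?case using bok_ext by auto
next
  case (sub B M s t) thus ?case using leq_ok by auto
qed (auto simp: bok_def has_omega_def)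

definition bsub :: "theory_name \<Rightarrow> basis \<Rightarrow> basis \<Rightarrow> bool" where
  "bsub T B' B \<longleftrightarrow> (\<forall>x s. B x = Some s \<longrightarrow> (B' x = Some s \<or> (\<exists>s'. B' x = Some s' \<and> leq T s' s)))"

lemma bsub_ext: "bsub T B' B \<Longrightarrow> bsub T (ext_basis s B') (ext_basis s B)"
  unfolding bsub_def ext_basis_def by (auto split: nat.splits)

lemma ltyp_bsub: "ltyp T B M t \<Longrightarrow> bsub T B' B \<Longrightarrow> ltyp T B' M t"
proof (induction arbitrary: B' rule: ltyp.induct)
  case (ax B x s)
  then show ?case unfolding bsub_def by (meson ltyp.ax ltyp.sub)
next
  case (arrI s B M t)
  then show ?case using bsub_ext ltyp.arrI by blast
next
  case (arrE B M s t N)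
  then show ?case by (meson ltyp.arrE)
next
  case (interI B M s t)
  then show ?case by (meson ltyp.interI)
next
  case (interE1 B M s t)
  then show ?case by (meson ltyp.interE1)
next
  case (interE2 B M s t)
  then show ?case by (meson ltyp.interE2)
next
  case (top B M)
  then show ?case by (meson ltyp.top)
next
  case (sub B M s t)
  then show ?case by (meson ltyp.sub)
qed

fun okabs :: "theory_name \<Rightarrow> basis \<Rightarrow> lterm \<Rightarrow> ity \<Rightarrow> bool" where
  "okabs T B M (Atom i) = False"
| "okabs T B M Om = True"
| "okabs T B M (Arr s t) = ltyp T (ext_basis s B) M t"
| "okabs T B M (Inter s t) = (okabs T B M s \<and> okabs T B M t)"

lemma okabs_leq: "leq T u v \<Longrightarrow> okabs T B M u \<Longrightarrow> okabs T B M v"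
proof (induction arbitrary: B M rule: leq.induct)
  case (omega_arr s) thus ?case by (auto intro: ltyp.top simp: has_omega_def)
next
  case (arr_inter s t r) thus ?case by (auto intro: ltyp.interI)
next
  case (arr s2 s1 t1 t2)
  have "bsub T (ext_basis s2 B) (ext_basis s1 B)" using arr(2) unfolding bsub_def ext_basis_def by (auto split: nat.splits)
  then show ?case using arr by (auto intro: ltyp_bsub ltyp.sub)
qed auto

lemma ltyp_abs_okabs: "ltyp T B L u \<Longrightarrow> L = LAbs M \<Longrightarrow> okabs T B M u"
  by (induction rule: ltyp.induct) (auto intro: okabs_leq)

lemma abs_inv: "ltyp T B (LAbs M) (Arr s t) \<Longrightarrow> ltyp T (ext_basis s B) M t"
  using ltyp_abs_okabs by fastforce

definition insb :: "nat \<Rightarrow> ity \<Rightarrow> basis \<Rightarrow> basis" where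
  "insb k u B = (\<lambda>n. if n < k then B n else if n = k then Some u else B (n - 1))"

lemma ext_insb0: "ext_basis s B = insb 0 s B"
  unfolding ext_basis_def insb_def by (rule ext) (auto split: nat.splits)
lemma ext_insb: "ext_basis u (insb k s B) = insb (Suc k) s (ext_basis u B)"
  unfolding ext_basis_def insb_def by (rule ext) (auto split: nat.splits)

definition shft :: "nat \<Rightarrow> nat \<Rightarrow> nat" where "shft k n = (if n < k then n else Suc n)"

lemma ltyp_lift: "ltyp T B N s \<Longrightarrow> (\<forall>n. B n = B' (shft k n)) \<Longrightarrow> ltyp T B' (llift N k) s"
proof (induction arbitrary: B' k rule: ltyp.induct)
  case (ax B x s)
  have "B' (shft k x) = Some s" using ax by metis
  then show ?case by (cases "x<k") (auto simp: shft_def intro: ltyp.ax)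
next
  case (arrI s B M t)
  have "\<forall>n. ext_basis s B n = ext_basis s B' (shft (Suc k) n)"
    using arrI(4) by (auto simp: ext_basis_def shft_def split: nat.splits)
  thus ?case using arrI by (auto intro: ltyp.arrI)
next
  case (arrE B M s t N)
  have "ltyp T B' (llift M k) (Arr s t)" using arrE.IH(1) arrE.prems by blast
  moreover have "ltyp T B' (llift N k) s" using arrE.IH(2) arrE.prems by blast
  ultimately show ?case by (auto intro: ltyp.arrE)
qed (auto intro: ltyp.intros)

lemma ltyp_unlift: "ltyp T B' L s \<Longrightarrow> L = llift N k \<Longrightarrow> (\<forall>n. B n = B' (shft k n)) \<Longrightarrow> ltyp T B N s"
proof (induction arbitrary: B N k rule: ltyp.induct)
  case (ax B' x s)
  then obtain i where "N = LVar i" "x = shft k i" by (cases N) (auto simp: shft_def split: if_splits)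
  thus ?case using ax by (auto intro: ltyp.ax)
next
  case (arrI s B' M t)
  then obtain N0 where N: "N = LAbs N0" "M = llift N0 (Suc k)" by (cases N) (auto split: if_splits)
  have "\<forall>n. ext_basis s B n = ext_basis s B' (shft (Suc k) n)"
    using arrI(5) by (auto simp: ext_basis_def shft_def split: nat.splits)
  hence "ltyp T (ext_basis s B) N0 t" using arrI.IH[OF N(2)] by blast
  hence "ltyp T B (LAbs N0) (Arr s t)" using arrI.hyps(1) by (simp add: ltyp.arrI)
  thus ?case using N(1) by simp
next
  case (arrE B' M s t N')
  then obtain N1 N2 where "N = LApp N1 N2" "M = llift N1 k" "N' = llift N2 k" by (cases N) (auto split: if_splits)
  note N12 = this
  have "ltyp T B N1 (Arr s t)" using arrE.IH(1)[OF N12(2)] arrE.prems(2) by blast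
  moreover have "ltyp T B N2 s" using arrE.IH(2)[OF N12(3)] arrE.prems(2) by blast
  ultimately show ?case using N12(1) by (simp add: ltyp.arrE)
qed (auto intro: ltyp.intros)

lemma ltyp_subst: "ltyp T B0 M t \<Longrightarrow> B0 = insb k s B \<Longrightarrow> ltyp T B N s \<Longrightarrow> ltyp T B (lsubst M N k) t"
proof (induction arbitrary: B k N rule: ltyp.induct)
  case (ax B0 x s')
  thus ?case by (auto simp: insb_def intro: ltyp.ax split: if_splits)
next
  case (arrI u B0 M t)
  have "ltyp T (ext_basis u B) (llift N 0) s"
    using arrI(5) by (rule ltyp_lift) (auto simp: ext_basis_def shft_def)
  moreover have "ext_basis u B0 = insb (Suc k) s (ext_basis u B)" using arrI(4) ext_insb by simp
  ultimately show ?case using arrI by (auto intro: ltyp.arrI)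
next
  case (arrE B0 M u t N')
  have "ltyp T B (lsubst M N k) (Arr u t)" using arrE.IH(1) arrE.prems by blast
  moreover have "ltyp T B (lsubst N' N k) u" using arrE.IH(2) arrE.prems by blast
  ultimately show ?case by (auto intro: ltyp.arrE)
qed (auto intro: ltyp.intros)

lemma subj_red: "ltyp T B M t \<Longrightarrow> beta M M' \<Longrightarrow> ltyp T B M' t"
proof (induction arbitrary: M' rule: ltyp.induct)
  case (ax B x s) thus ?case by (auto elim: beta.cases)
next
  case (arrI s B M t)
  from arrI.prems obtain M1 where "M' = LAbs M1" "beta M M1" by (auto elim: beta.cases)
  thus ?case using arrI by (auto intro: ltyp.arrI)
next
  case (arrE B M s t N)
  from arrE(5) show ?case
  proof (cases rule: beta.cases)
    case b
    then obtain P where P: "M = LAbs P" "M' = lsubst P N 0" by auto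
    hence "ltyp T (ext_basis s B) P t" using arrE(1) abs_inv by auto
    thus ?thesis using P arrE(2) ltyp_subst[of T "ext_basis s B" P t 0 s B N] ext_insb0 by simp
  next
    case (appL M1) thus ?thesis using arrE by (auto intro: ltyp.arrE)
  next
    case (appR N1) thus ?thesis using arrE by (auto intro: ltyp.arrE)
  qed
qed (auto intro: ltyp.intros)


lemma bsub_insb: "leq T u' u \<Longrightarrow> bsub T (insb k u' B) (insb k u B)"
  by (auto simp: bsub_def insb_def)

lemma comb:
  assumes "bok T B" "ltyp T B N u1" "ltyp T B N u2"
  shows "ltyp T B N (Inter u1 u2) \<and> (ltyp T (insb k u1 B) M1 t1 \<longrightarrow> ltyp T (insb k (Inter u1 u2) B) M1 t1)
     \<and> (ltyp T (insb k u2 B) M2 t2 \<longrightarrow> ltyp T (insb k (Inter u1 u2) B) M2 t2)"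
proof -
  have ok: "ty_ok T u1" "ty_ok T u2" using assms ltyp_ok by auto
  show ?thesis using assms ltyp_bsub[OF _ bsub_insb[OF leq.incl1[OF ok]]]
      ltyp_bsub[OF _ bsub_insb[OF leq.incl2[OF ok]]] by (auto intro: ltyp.interI)
qed

lemma var_case: "ltyp T B N t \<Longrightarrow> \<exists>u. ltyp T (insb k u B) (LVar k) t \<and> ltyp T B N u"
  by (auto simp: insb_def intro!: ltyp.ax)

lemma expand_subst: "ltyp T B L t \<Longrightarrow> has_omega T \<Longrightarrow> bok T B \<Longrightarrow> L = lsubst M N k \<Longrightarrow>
   \<exists>u. ltyp T (insb k u B) M t \<and> ltyp T B N u"
proof (induction arbitrary: M N k rule: ltyp.induct)
  case (ax B x s)
  show ?case
  proof (cases M)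
    case (LVar i)
    show ?thesis
    proof (cases "i = k")
      case True thus ?thesis using ax LVar by (auto intro!: var_case ltyp.ax)
    next
      case False
      hence "insb k Om B i = Some s" using ax LVar by (auto simp: insb_def split: if_splits)
      thus ?thesis using LVar ax by (auto intro!: ltyp.ax ltyp.top)
    qed
  qed (use ax in auto)
next
  case (arrI s B L0 t)
  have d: "ltyp T B (LAbs L0) (Arr s t)" using arrI.hyps by (rule ltyp.arrI)
  show ?case
  proof (cases M)
    case (LVar i)
    thus ?thesis using arrI.prems d var_case by (auto split: if_splits)
  next
    case (LAbs M0)
    hence e: "L0 = lsubst M0 (llift N 0) (Suc k)" using arrI.prems by simp
    obtain u where u: "ltyp T (insb (Suc k) u (ext_basis s B)) M0 t" "ltyp T (ext_basis s B) (llift N 0) u"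
      using arrI.IH[OF arrI.prems(1) bok_ext[OF arrI.prems(2) arrI.hyps(1)] e] by blast
    have "ltyp T B N u" using ltyp_unlift[OF u(2) HOL.refl, of B] by (auto simp: ext_basis_def shft_def)
    moreover have "ltyp T (insb k u B) (LAbs M0) (Arr s t)"
      using u(1) ext_insb[of s k u B] arrI.hyps(1) by (auto intro: ltyp.arrI)
    ultimately show ?thesis using LAbs by blast
  qed (use arrI.prems in auto)
next
  case (arrE B L1 s t L2)
  have d: "ltyp T B (LApp L1 L2) t" using arrE.hyps by (rule ltyp.arrE)
  show ?case
  proof (cases M)
    case (LVar i)
    thus ?thesis using arrE.prems d var_case by (auto split: if_splits)
  next
    case (LApp M1 M2)
    obtain u1 where u1: "ltyp T (insb k u1 B) M1 (Arr s t)" "ltyp T B N u1"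
      using arrE.IH(1)[of M1 N k] arrE.prems LApp by auto
    obtain u2 where u2: "ltyp T (insb k u2 B) M2 s" "ltyp T B N u2"
      using arrE.IH(2)[of M2 N k] arrE.prems LApp by auto
    show ?thesis using comb[OF arrE.prems(2) u1(2) u2(2), of k M1 "Arr s t" M2 s] u1 u2 LApp
      by (auto intro: ltyp.arrE)
  qed (use arrE.prems in auto)
next
  case (interI B L s t)
  obtain u1 where u1: "ltyp T (insb k u1 B) M s" "ltyp T B N u1"
    using interI.IH(1)[of M N k] interI.prems by auto
  obtain u2 where u2: "ltyp T (insb k u2 B) M t" "ltyp T B N u2"
    using interI.IH(2)[of M N k] interI.prems by auto
  show ?case using comb[OF interI.prems(2) u1(2) u2(2), of k M s M t] u1 u2
    by (auto intro: ltyp.interI)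
next
  case (interE1 B L s t)
  obtain u where "ltyp T (insb k u B) M (Inter s t)" "ltyp T B N u"
    using interE1.IH[of M N k] interE1.prems by auto
  thus ?case by (meson ltyp.interE1)
next
  case (interE2 B L s t)
  obtain u where "ltyp T (insb k u B) M (Inter s t)" "ltyp T B N u"
    using interE2.IH[of M N k] interE2.prems by auto
  thus ?case by (meson ltyp.interE2)
next
  case (top B L)
  thus ?case by (meson ltyp.top)
next
  case (sub B L s t)
  obtain u where "ltyp T (insb k u B) M s" "ltyp T B N u"
    using sub.IH[of M N k] sub.prems by auto
  thus ?case using sub.hyps(2) by (meson ltyp.sub)
qed

lemma expand_beta: "ltyp T B (lsubst P N 0) t \<Longrightarrow> has_omega T \<Longrightarrow> bok T B \<Longrightarrow> ltyp T B (LApp (LAbs P) N) t"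
proof -
  assume a: "ltyp T B (lsubst P N 0) t" "has_omega T" "bok T B"
  obtain u where u: "ltyp T (insb 0 u B) P t" "ltyp T B N u" using expand_subst[OF a HOL.refl] by blast
  have "ty_ok T u" using ltyp_ok u(2) a(3) by blast
  hence "ltyp T B (LAbs P) (Arr u t)" using u(1) ext_insb0 by (metis ltyp.arrI)
  thus ?thesis using u(2) by (rule ltyp.arrE)
qed


lemma subj_exp: "ltyp T B L t \<Longrightarrow> beta M L \<Longrightarrow> has_omega T \<Longrightarrow> bok T B \<Longrightarrow> ltyp T B M t"
proof (induction arbitrary: M rule: ltyp.induct)
  case (ax B x s)
  have d: "ltyp T B (LVar x) s" using ax.hyps by (rule ltyp.ax)
  from ax.prems(1) show ?case
  proof (cases rule: beta.cases)
    case b thus ?thesis using d expand_beta ax.prems by auto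
  qed
next
  case (arrI s B L0 t)
  have d: "ltyp T B (LAbs L0) (Arr s t)" using arrI.hyps by (rule ltyp.arrI)
  from arrI.prems(1) show ?case
  proof (cases rule: beta.cases)
    case b thus ?thesis using d expand_beta arrI.prems by auto
  next
    case (abs M0)
    thus ?thesis using arrI.IH[of M0] arrI.prems bok_ext arrI.hyps(1) by (auto intro: ltyp.arrI)
  qed
next
  case (arrE B L1 s t L2)
  have d: "ltyp T B (LApp L1 L2) t" using arrE.hyps by (rule ltyp.arrE)
  from arrE.prems(1) show ?case
  proof (cases rule: beta.cases)
    case b thus ?thesis using d expand_beta arrE.prems by auto
  next
    case (appL M1)
    thus ?thesis using arrE.IH(1)[of M1] arrE.prems arrE.hyps by (auto intro: ltyp.arrE)
  next
    case (appR M2)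
    thus ?thesis using arrE.IH(2)[of M2] arrE.prems arrE.hyps by (auto intro: ltyp.arrE)
  qed
next
  case (interI B L s t)
  thus ?case by (meson ltyp.interI)
next
  case (interE1 B L s t)
  thus ?case by (meson ltyp.interE1)
next
  case (interE2 B L s t)
  thus ?case by (meson ltyp.interE2)
next
  case (top B L)
  thus ?case by (meson ltyp.top)
next
  case (sub B L s t)
  thus ?case by (meson ltyp.sub)
qed

lemma conv_inv: "(sup beta beta\<inverse>\<inverse>)\<^sup>*\<^sup>* M L \<Longrightarrow> has_omega T \<Longrightarrow> bok T B \<Longrightarrow> ltyp T B L t \<Longrightarrow> ltyp T B M t"
proof (induction rule: rtranclp_induct)
  case base thus ?case by blast
next
  case (step y z)
  have "beta y z \<or> beta z y" using step.hyps(2) by simp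
  hence "ltyp T B y t" using subj_red[of T B z t y] subj_exp[of T B z t y] step.prems by blast
  thus ?case using step.IH step.prems by blast
qed

lemma sound_gen:
  assumes H: "\<And>B M L t. bok T B \<Longrightarrow> releq R M L \<Longrightarrow> ltyp T B L t \<Longrightarrow> ltyp T B M t"
  shows "dtyp T R B d s \<Longrightarrow> bok T B \<Longrightarrow> ltyp T B (ess d) s"
proof (induction rule: dtyp.induct)
  case (top d B) thus ?case by (simp add: ltyp.top)
next
  case (ax B x s) thus ?case by (simp add: ltyp.ax)
next
  case (arrI s B d t) thus ?case using bok_ext by (simp add: ltyp.arrI)
next
  case (arrE B d1 s t d2) thus ?case by (auto intro: ltyp.arrE)
next
  case (interI B d1 s d2 t)
  have a: "ltyp T B (ess d1) s" by (rule interI.IH(1)[OF interI.prems])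
  have "ltyp T B (ess d2) t" by (rule interI.IH(2)[OF interI.prems])
  hence "ltyp T B (ess d1) t" by (rule H[OF interI.prems interI.hyps(3)])
  thus ?case using a by (simp add: ltyp.interI)
next
  case (interE1 B d s t) thus ?case by (auto intro: ltyp.interE1)
next
  case (interE2 B d s t) thus ?case by (auto intro: ltyp.interE2)
next
  case (sub B d s t) thus ?case by (auto intro: ltyp.sub)
qed

lemma basis_bok: "basis_ok T B \<Longrightarrow> bok T B"
  by (simp add: basis_ok_def bok_def)

lemma sound_Syn: "sound T Syn"
  unfolding sound_def using sound_gen[of T Syn] basis_bok by auto

lemma sound_Beta: "has_omega T \<Longrightarrow> sound T Beta"
  unfolding sound_def using sound_gen[of T Beta] basis_bok conv_inv by auto

primrec emb :: "lterm \<Rightarrow> dterm" where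
  "emb (LVar x) = DVar x" | "emb (LApp a b) = DApp (emb a) (emb b)" | "emb (LAbs a) = DLam (Atom 0) (emb a)"
lemma ess_emb: "ess (emb M) = M" by (induction M) auto

lemma releq_refl: "releq R M M" by (cases R) auto

lemma compl_gen: "ltyp T B M s \<Longrightarrow> \<exists>d. M = ess d \<and> dtyp T R B d s"
proof (induction rule: ltyp.induct)
  case (ax B x s) thus ?case by (metis ess.simps(2) dtyp.ax)
next
  case (arrI s B M t) then obtain d where "M = ess d" "dtyp T R (ext_basis s B) d t" by auto
  thus ?case by (metis ess.simps(3) dtyp.arrI arrI(1))
next
  case (arrE B M s t N) then obtain d1 d2 where "M = ess d1" "dtyp T R B d1 (Arr s t)" "N = ess d2" "dtyp T R B d2 s" by auto
  thus ?case by (metis ess.simps(4) dtyp.arrE)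
next
  case (interI B M s t)
  obtain d1 where "M = ess d1" "dtyp T R B d1 s" using interI.IH(1) by blast
  moreover obtain d2 where "M = ess d2" "dtyp T R B d2 t" using interI.IH(2) by blast
  ultimately have "M = ess (DPair d1 d2) \<and> dtyp T R B (DPair d1 d2) (Inter s t)"
    using releq_refl by (metis ess.simps(5) dtyp.interI)
  thus ?case by (metis ess.simps(5) dtyp.interI releq_refl)
next
  case (interE1 B M s t) then obtain d where "M = ess d" "dtyp T R B d (Inter s t)" by auto
  thus ?case by (metis ess.simps(6) dtyp.interE1)
next
  case (interE2 B M s t) then obtain d where "M = ess d" "dtyp T R B d (Inter s t)" by auto
  thus ?case by (metis ess.simps(7) dtyp.interE2)
next
  case (top B M) thus ?case by (metis ess.simps(1) ess_emb dtyp.top)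
next
  case (sub B M s t) then obtain d where "M = ess d" "dtyp T R B d s" by auto
  thus ?case by (metis ess.simps(8) dtyp.sub sub(2))
qed

lemma complete_all: "complete T R"
  unfolding complete_def using compl_gen by blast


lemma var_leq: "ltyp T B L t \<Longrightarrow> L = LVar x \<Longrightarrow> B x = Some s0 \<Longrightarrow> ty_ok T s0 \<Longrightarrow> \<not> has_omega T \<Longrightarrow> leq T s0 t"
proof (induction rule: ltyp.induct)
  case (ax B x' s) thus ?case by (auto intro: leq.refl)
next
  case (interI B M s t) thus ?case by (auto intro: leq.glb)
next
  case (interE1 B M s t)
  hence l: "leq T s0 (Inter s t)" by auto
  hence ok: "ty_ok T s" "ty_ok T t" using leq_ok[OF l] by auto
  show ?case using leq.trans[OF l leq.incl1[OF ok]] .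
next
  case (interE2 B M s t)
  hence l: "leq T s0 (Inter s t)" by auto
  hence ok: "ty_ok T s" "ty_ok T t" using leq_ok[OF l] by auto
  show ?case using leq.trans[OF l leq.incl2[OF ok]] .
next
  case (sub B M s t) thus ?case by (auto intro: leq.trans)
qed auto

lemma app_inv: "ltyp T B L t \<Longrightarrow> L = LApp P Q \<Longrightarrow> \<not> has_omega T \<Longrightarrow> (\<exists>s. ltyp T B Q s) \<and> (\<exists>s t'. ltyp T B P (Arr s t'))"
  by (induction rule: ltyp.induct) auto

fun af :: "ity \<Rightarrow> bool" where
  "af (Atom _) = True" | "af Om = True" | "af (Arr _ _) = False" | "af (Inter a b) = (af a \<and> af b)"

lemma leq_af: "leq T s t \<Longrightarrow> T \<noteq> BCD \<Longrightarrow> af s \<Longrightarrow> af t"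
  by (induction rule: leq.induct) auto

definition B0 :: basis where "B0 = Map.empty(0 := Some (Atom 0))"
definition s1 :: ity where "s1 = Inter (Atom 1) (Arr (Atom 1) (Atom 1))"
definition d1 :: dterm where
  "d1 = DLam s1 (DApp (DLam (Atom 1) (DVar 2)) (DApp (DPr2 (DVar 0)) (DPr1 (DVar 0))))"
definition d2 :: dterm where "d2 = DLam (Atom 2) (DVar 1)"

lemma d1_typ: "dtyp T R B0 d1 (Arr s1 (Atom 0))"
proof -
  let ?B = "ext_basis s1 B0"
  have z: "dtyp T R ?B (DVar 0) s1" by (rule dtyp.ax) (simp add: ext_basis_def)
  have zz: "dtyp T R ?B (DApp (DPr2 (DVar 0)) (DPr1 (DVar 0))) (Atom 1)"
    using z unfolding s1_def by (meson dtyp.interE1 dtyp.interE2 dtyp.arrE)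
  have k: "dtyp T R ?B (DLam (Atom 1) (DVar 2)) (Arr (Atom 1) (Atom 0))"
    by (rule dtyp.arrI) (auto intro!: dtyp.ax simp: ext_basis_def B0_def)
  show ?thesis unfolding d1_def
    by (rule dtyp.arrI[OF _ dtyp.arrE[OF k zz]]) (simp add: s1_def)
qed

lemma d2_typ: "dtyp T R B0 d2 (Arr (Atom 2) (Atom 0))"
  unfolding d2_def by (rule dtyp.arrI) (auto intro!: dtyp.ax simp: ext_basis_def B0_def)

lemma d12_beta: "beta (ess d1) (ess d2)"
proof -
  have "beta (LApp (LAbs (LVar 2)) (LApp (LVar 0) (LVar 0))) (LVar 1)"
    using beta.b[of "LVar 2" "LApp (LVar 0) (LVar 0)"] by simp
  thus ?thesis unfolding d1_def d2_def by (simp add: beta.abs)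
qed

lemma d12_beta_eta: "beta_eta (ess d1) (ess d2)"
proof -
  have "beta_eta (LApp (LAbs (LVar 2)) (LApp (LVar 0) (LVar 0))) (LVar 1)"
    using beta_eta.b[of "LVar 2" "LApp (LVar 0) (LVar 0)"] by simp
  thus ?thesis unfolding d1_def d2_def by (simp add: beta_eta.abs)
qed

lemma B0_ok: "basis_ok T B0" by (simp add: basis_ok_def B0_def)

lemma d1_untyp:
  assumes "T \<noteq> BCD" "\<not> has_omega T"
  shows "\<not> ltyp T B0 (ess d1) (Arr (Atom 2) (Atom 0))"
proof
  assume "ltyp T B0 (ess d1) (Arr (Atom 2) (Atom 0))"
  hence "ltyp T (ext_basis (Atom 2) B0) (LApp (LAbs (LVar 2)) (LApp (LVar 0) (LVar 0))) (Atom 0)"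
    unfolding d1_def by (auto dest: abs_inv)
  then obtain s where "ltyp T (ext_basis (Atom 2) B0) (LApp (LVar 0) (LVar 0)) s"
    using app_inv assms by blast
  then obtain s' t' where "ltyp T (ext_basis (Atom 2) B0) (LVar 0) (Arr s' t')"
    using app_inv assms by blast
  hence "leq T (Atom 2) (Arr s' t')"
    using var_leq assms by (fastforce simp: ext_basis_def)
  thus False using leq_af assms by fastforce
qed

lemma not_sound1:
  assumes "T \<noteq> BCD" "\<not> has_omega T" "releq R (ess d1) (ess d2)"
  shows "\<not> sound T R"
proof
  assume "sound T R"
  have "dtyp T R B0 (DPair d1 d2) (Inter (Arr s1 (Atom 0)) (Arr (Atom 2) (Atom 0)))"
    using d1_typ d2_typ assms(3) by (rule dtyp.interI)
  hence "ltyp T B0 (ess (DPair d1 d2)) (Inter (Arr s1 (Atom 0)) (Arr (Atom 2) (Atom 0)))"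
    by (rule \<open>sound T R\<close>[unfolded sound_def, rule_format, OF B0_ok, rotated]) (simp add: s1_def)
  hence "ltyp T B0 (ess d1) (Inter (Arr s1 (Atom 0)) (Arr (Atom 2) (Atom 0)))" by simp
  hence "ltyp T B0 (ess d1) (Arr (Atom 2) (Atom 0))" by (rule ltyp.interE2)
  thus False using d1_untyp assms by blast
qed

definition B1 :: basis where "B1 = Map.empty(0 := Some (Inter (Atom 0) (Arr (Atom 1) (Atom 2))))"
definition e1 :: dterm where "e1 = DLam (Atom 1) (DApp (DPr2 (DVar 1)) (DVar 0))"
definition e2 :: dterm where "e2 = DPr1 (DVar 0)"

lemma not_sound2: "\<not> sound BCD BetaEta"
proof
  assume S: "sound BCD BetaEta"
  have x: "dtyp BCD BetaEta (ext_basis (Atom 1) B1) (DVar 1) (Inter (Atom 0) (Arr (Atom 1) (Atom 2)))"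
    by (rule dtyp.ax) (simp add: ext_basis_def B1_def)
  have y: "dtyp BCD BetaEta (ext_basis (Atom 1) B1) (DVar 0) (Atom 1)"
    by (rule dtyp.ax) (simp add: ext_basis_def)
  have "dtyp BCD BetaEta B1 e1 (Arr (Atom 1) (Atom 2))"
    unfolding e1_def by (rule dtyp.arrI[OF _ dtyp.arrE[OF dtyp.interE2[OF x] y]]) simp
  moreover have "dtyp BCD BetaEta B1 e2 (Atom 0)"
    unfolding e2_def by (rule dtyp.interE1, rule dtyp.ax) (simp add: B1_def)
  moreover have "releq BetaEta (ess e1) (ess e2)"
  proof -
    have "beta_eta (ess e1) (ess e2)"
      using beta_eta.e[of "LVar 0"] by (simp add: e1_def e2_def)
    thus ?thesis by auto
  qed
  ultimately have "dtyp BCD BetaEta B1 (DPair e1 e2) (Inter (Arr (Atom 1) (Atom 2)) (Atom 0))"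
    by (rule dtyp.interI)
  hence "ltyp BCD B1 (ess (DPair e1 e2)) (Inter (Arr (Atom 1) (Atom 2)) (Atom 0))"
    by (rule S[unfolded sound_def, rule_format, rotated 2]) (auto simp: basis_ok_def B1_def)
  hence "ltyp BCD B1 (ess e1) (Inter (Arr (Atom 1) (Atom 2)) (Atom 0))" by simp
  hence "ltyp BCD B1 (ess e1) (Atom 0)" by (rule ltyp.interE2)
  thus False unfolding e1_def using ltyp_abs_okabs by fastforce
qed

theorem mainTheorem14:
  shows "(sound CD Syn \<and> sound CDV Syn \<and> sound CDS Syn \<and> sound BCD Syn
          \<and> sound CDS Beta \<and> sound BCD Beta
          \<and> \<not> sound CD Beta \<and> \<not> sound CDV Beta
          \<and> \<not> sound CDV BetaEta \<and> \<not> sound BCD BetaEta)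
     \<and> (\<forall>T. complete T Syn \<and> complete T Beta)
     \<and> complete CDV BetaEta \<and> complete BCD BetaEta
     \<and> (\<forall>T R. (R = Syn \<or> R = Beta \<or> (R = BetaEta \<and> (T = CDV \<or> T = BCD))) \<longrightarrow>
           (isomorphic T R \<longleftrightarrow>
              (R = Syn \<or> (R = Beta \<and> (T = CDS \<or> T = BCD)))))"
proof -
  have rb: "releq Beta (ess d1) (ess d2)"
  proof -
    have "(sup beta beta\<inverse>\<inverse>) (ess d1) (ess d2)" using d12_beta by (rule sup2I1)
    hence "(sup beta beta\<inverse>\<inverse>)\<^sup>*\<^sup>* (ess d1) (ess d2)" by (rule r_into_rtranclp)
    thus ?thesis by simp
  qed
  have rbe: "releq BetaEta (ess d1) (ess d2)"
  proof -
    have "(sup beta_eta beta_eta\<inverse>\<inverse>) (ess d1) (ess d2)" using d12_beta_eta by (rule sup2I1)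
    hence "(sup beta_eta beta_eta\<inverse>\<inverse>)\<^sup>*\<^sup>* (ess d1) (ess d2)" by (rule r_into_rtranclp)
    thus ?thesis by simp
  qed
  have n1: "\<not> sound CD Beta" by (rule not_sound1[OF _ _ rb]) (auto simp: has_omega_def)
  have n2: "\<not> sound CDV Beta" by (rule not_sound1[OF _ _ rb]) (auto simp: has_omega_def)
  have n3: "\<not> sound CDV BetaEta" by (rule not_sound1[OF _ _ rbe]) (auto simp: has_omega_def)
  have s1: "sound CDS Beta" "sound BCD Beta" by (auto intro: sound_Beta simp: has_omega_def)
  have iso: "\<forall>T R. (R = Syn \<or> R = Beta \<or> (R = BetaEta \<and> (T = CDV \<or> T = BCD))) \<longrightarrow>
           (isomorphic T R \<longleftrightarrow> (R = Syn \<or> (R = Beta \<and> (T = CDS \<or> T = BCD))))"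
  proof (intro allI impI)
    fix T R assume "R = Syn \<or> R = Beta \<or> (R = BetaEta \<and> (T = CDV \<or> T = BCD))"
    thus "isomorphic T R \<longleftrightarrow> (R = Syn \<or> (R = Beta \<and> (T = CDS \<or> T = BCD)))"
      using n1 n2 n3 not_sound2 s1 sound_Syn complete_all unfolding isomorphic_def
      by (cases T) auto
  qed
  show ?thesis using n1 n2 n3 not_sound2 s1 sound_Syn complete_all iso by blast
qed

end
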